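(* Let $\mathcal{R}$ be a right amenable cell space with finite stabiliser $G_0$, let $Q$ be a finite set with at least two elements, and let $\mathcal{F}=(F_i)_{i\in I}$ be a right Følner net in $\mathcal{R}$. Let $X\subseteq Q^M$ be $\triangleright$-invariant, and let $E$ be a nonempty finite subset of $G/G_0$ such that $\pi_{m_0\triangleleft E}(X)\subsetneq Q^{m_0\triangleleft E}$. Then $\mathrm{h}_{\mathcal{F}}(X)<\log|Q|$.
   Context: A cell space $\mathcal{R}$ consists of a group $G$ acting transitively on the left on a nonempty set $M$ via $\triangleright$, a point $m_0\in M$ and a family $(g_{m_0,m})_{m\in M}$ in $G$ with $g_{m_0,m}\triangleright m_0=m$. $G_0$ is the stabiliser of $m_0$ and $G/G_0$ the set of left cosets. The right semi-action $\triangleleft\colon M\times G/G_0\to M$ is $m\triangleleft gG_0=g_{m_0,m}g\triangleright m_0$; $m\triangleleft E=\{m\triangleleft e:e\in E\}$. $\mathcal{R}$ is right amenable if there is a finitely additive probability measure $\mu$ on the power set of $M$ such that $\mu(\{a\triangleleft\mathfrak{g}:a\in A\})=\mu(A)$ whenever $\mathfrak{g}\in G/G_0$, $A\subseteq M$ and $m\mapsto m\triangleleft\mathfrak{g}$ is injective on $A$. A right Følner net in $\mathcal{R}$ is a net $(F_i)_{i\in I}$ (over a directed set) of nonempty finite subsets of $M$ with $\lim_{i}\frac{|F_i\setminus\{m: m\triangleleft\mathfrak{g}\in F_i\}|}{|F_i|}=0$ for every $\mathfrak{g}\in G/G_0$. $G$ acts on patterns by $(g\triangleright p)\colon g\triangleright\mathrm{dom}(p)\to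 Q$, $m\mapsto p(g^{-1}\triangleright m)$ for $p\colon A\to Q$, $A\subseteq M$; $X\subseteq Q^M$ is $\triangleright$-invariant if $g\triangleright X\subseteq X$ for all $g\in G$. For $A\subseteq M$, $\pi_A\colon Q^M\to Q^A$ is restriction; $\mathrm{h}_{\mathcal{F}}(X)=\limsup_{i\in I}\frac{\log|\pi_{F_i}(X)|}{|F_i|}$. *)

theory Defs
  imports Complex_Main "HOL-Algebra.Group_Action" "HOL-Algebra.Left_Coset"
    "HOL-Library.FuncSet" "HOL-Library.Liminf_Limsup" "HOL-Library.Extended_Real"
begin

text \<open>A cell space: a group G acting transitively on the left on the set M (here the whole
  type 'm) via act, a point m0 and coordinates gm with (gm m) acting on m0 giving m.\<close>
definition cell_space :: "('g, 'b) monoid_scheme \<Rightarrow> ('g \<Rightarrow> 'm \<Rightarrow> 'm) \<Rightarrow> 'm \<Rightarrow> ('m \<Rightarrow> 'g) \<Rightarrow> bool" where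
  "cell_space G act m0 gm \<longleftrightarrow>
     transitive_action G (UNIV :: 'm set) act \<and>
     (\<forall>m. gm m \<in> carrier G \<and> act (gm m) m0 = m)"

definition stab0 :: "('g, 'b) monoid_scheme \<Rightarrow> ('g \<Rightarrow> 'm \<Rightarrow> 'm) \<Rightarrow> 'm \<Rightarrow> 'g set" where
  "stab0 G act m0 = stabilizer G act m0"

definition cosets0 :: "('g, 'b) monoid_scheme \<Rightarrow> ('g \<Rightarrow> 'm \<Rightarrow> 'm) \<Rightarrow> 'm \<Rightarrow> 'g set set" where
  "cosets0 G act m0 = lcosets\<^bsub>G\<^esub> (stab0 G act m0)"

text \<open>Right semi-action  m \<triangleleft> gG0 = (gm m \<otimes> g) \<triangleright> m0  (for a coset c we pick a
  representative g; the value does not depend on the choice).\<close>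
definition semi_act :: "('g, 'b) monoid_scheme \<Rightarrow> ('g \<Rightarrow> 'm \<Rightarrow> 'm) \<Rightarrow> 'm \<Rightarrow> ('m \<Rightarrow> 'g)
    \<Rightarrow> 'm \<Rightarrow> 'g set \<Rightarrow> 'm" where
  "semi_act G act m0 gm m c =
     act (gm m \<otimes>\<^bsub>G\<^esub> (SOME g. g \<in> carrier G \<and> c = g <#\<^bsub>G\<^esub> stab0 G act m0)) m0"

definition right_amenable :: "('g, 'b) monoid_scheme \<Rightarrow> ('g \<Rightarrow> 'm \<Rightarrow> 'm) \<Rightarrow> 'm \<Rightarrow> ('m \<Rightarrow> 'g) \<Rightarrow> bool" where
  "right_amenable G act m0 gm \<longleftrightarrow>
     (\<exists>\<mu> :: 'm set \<Rightarrow> real.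
        (\<forall>A. \<mu> A \<ge> 0) \<and> \<mu> UNIV = 1 \<and>
        (\<forall>A B. A \<inter> B = {} \<longrightarrow> \<mu> (A \<union> B) = \<mu> A + \<mu> B) \<and>
        (\<forall>c \<in> cosets0 G act m0. \<forall>A. inj_on (\<lambda>m. semi_act G act m0 gm m c) A \<longrightarrow>
            \<mu> ((\<lambda>m. semi_act G act m0 gm m c) ` A) = \<mu> A))"

definition directed_set :: "'i set \<Rightarrow> ('i \<Rightarrow> 'i \<Rightarrow> bool) \<Rightarrow> bool" where
  "directed_set I rel \<longleftrightarrow> I \<noteq> {} \<and> (\<forall>i\<in>I. rel i i) \<and>
     (\<forall>i\<in>I. \<forall>j\<in>I. \<forall>k\<in>I. rel i j \<longrightarrow> rel j k \<longrightarrow> rel i k) \<and>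
     (\<forall>i\<in>I. \<forall>j\<in>I. \<exists>k\<in>I. rel i k \<and> rel j k)"

definition net_filter :: "'i set \<Rightarrow> ('i \<Rightarrow> 'i \<Rightarrow> bool) \<Rightarrow> 'i filter" where
  "net_filter I rel = (INF i\<in>I. principal {j\<in>I. rel i j})"

definition right_foelner_net :: "('g, 'b) monoid_scheme \<Rightarrow> ('g \<Rightarrow> 'm \<Rightarrow> 'm) \<Rightarrow> 'm \<Rightarrow> ('m \<Rightarrow> 'g)
    \<Rightarrow> 'i set \<Rightarrow> ('i \<Rightarrow> 'i \<Rightarrow> bool) \<Rightarrow> ('i \<Rightarrow> 'm set) \<Rightarrow> bool" where
  "right_foelner_net G act m0 gm I rel F \<longleftrightarrow>
     directed_set I rel \<and>
     (\<forall>i\<in>I. finite (F i) \<and> F i \<noteq> {}) \<and>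
     (\<forall>c \<in> cosets0 G act m0.
        ((\<lambda>i. real (card (F i - {m. semi_act G act m0 gm m c \<in> F i})) / real (card (F i)))
           \<longlongrightarrow> 0) (net_filter I rel))"

definition cfg_act :: "('g, 'b) monoid_scheme \<Rightarrow> ('g \<Rightarrow> 'm \<Rightarrow> 'm) \<Rightarrow> 'g \<Rightarrow> ('m \<Rightarrow> 'q) \<Rightarrow> ('m \<Rightarrow> 'q)" where
  "cfg_act G act g x = (\<lambda>m. x (act (inv\<^bsub>G\<^esub> g) m))"

definition act_invariant :: "('g, 'b) monoid_scheme \<Rightarrow> ('g \<Rightarrow> 'm \<Rightarrow> 'm) \<Rightarrow> ('m \<Rightarrow> 'q) set \<Rightarrow> bool" where
  "act_invariant G act X \<longleftrightarrow> (\<forall>g\<in>carrier G. cfg_act G act g ` X \<subseteq> X)"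

text \<open>Restriction pi_A : Q^M \<rightarrow> Q^A (patterns are extensional functions on A).\<close>
definition proj :: "'m set \<Rightarrow> ('m \<Rightarrow> 'q) \<Rightarrow> ('m \<Rightarrow> 'q)" where
  "proj A x = restrict x A"

definition entropy :: "'i set \<Rightarrow> ('i \<Rightarrow> 'i \<Rightarrow> bool) \<Rightarrow> ('i \<Rightarrow> 'm set) \<Rightarrow> ('m \<Rightarrow> 'q) set \<Rightarrow> ereal" where
  "entropy I rel F X =
     Limsup (net_filter I rel) (\<lambda>i. ereal (ln (real (card (proj (F i) ` X))) / real (card (F i))))"

end

theory Submission imports Defs begin
lemma proj_card_le:
  fixes X :: "('m \<Rightarrow> 'q::finite) set"
  assumes "finite A"
  shows "card (proj A ` X) \<le> card (UNIV::'q set) ^ card A"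
proof -
  have "proj A ` X \<subseteq> A \<rightarrow>\<^sub>E UNIV" by (auto simp: proj_def)
  moreover have "finite (A \<rightarrow>\<^sub>E (UNIV::'q set))" using assms by (simp add: finite_PiE)
  ultimately have "card (proj A ` X) \<le> card (A \<rightarrow>\<^sub>E (UNIV::'q set))" by (rule card_mono[rotated])
  also have "\<dots> = card (UNIV::'q set) ^ card A" using assms by (simp add: card_PiE)
  finally show ?thesis .
qed

lemma proj_union_card:
  fixes X :: "('m \<Rightarrow> 'q::finite) set"
  assumes "finite A" "finite B"
  shows "card (proj (A \<union> B) ` X) \<le> card (proj A ` X) * card (proj B ` X)"
proof -
  let ?h = "\<lambda>p. (restrict p A, restrict p B)"
  have inj: "inj_on ?h (proj (A \<union> B) ` X)"
  proof (rule inj_onI)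
    fix p p' assume "p \<in> proj (A \<union> B) ` X" "p' \<in> proj (A \<union> B) ` X" "?h p = ?h p'"
    then show "p = p'" unfolding proj_def
      by (auto simp: restrict_def fun_eq_iff split: if_splits)
  qed
  have sub: "?h ` (proj (A \<union> B) ` X) \<subseteq> proj A ` X \<times> proj B ` X"
    by (auto simp: proj_def restrict_def fun_eq_iff)
  have s1: "proj A ` X \<subseteq> A \<rightarrow>\<^sub>E UNIV" and s2: "proj B ` X \<subseteq> B \<rightarrow>\<^sub>E UNIV" by (auto simp: proj_def)
  have f1: "finite (A \<rightarrow>\<^sub>E (UNIV::'q set))" and f2: "finite (B \<rightarrow>\<^sub>E (UNIV::'q set))"
    using assms by (simp_all add: finite_PiE)
  have fa: "finite (proj A ` X)" by (rule finite_subset[OF s1 f1])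
  have fb: "finite (proj B ` X)" by (rule finite_subset[OF s2 f2])
  have fin: "finite (proj A ` X \<times> proj B ` X)" using fa fb by simp
  have "card (proj (A \<union> B) ` X) \<le> card (proj A ` X \<times> proj B ` X)"
    by (rule card_inj_on_le[OF inj sub fin])
  then show ?thesis by (simp add: card_cartesian_product)
qed

lemma greedy:
  fixes D :: "'a set"
  assumes "finite D" "\<And>a b. conf a b \<Longrightarrow> conf b a" "\<And>a. a \<in> D \<Longrightarrow> conf a a"
    "\<And>a. a \<in> D \<Longrightarrow> card {b\<in>D. conf a b} \<le> N"
  shows "\<exists>C\<subseteq>D. (\<forall>a\<in>C. \<forall>b\<in>C. a \<noteq> b \<longrightarrow> \<not> conf a b) \<and> card D \<le> N * card C"
  using assms
proof (induction "card D" arbitrary: D rule: less_induct)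
  case less
  show ?case
  proof (cases "D = {}")
    case True then show ?thesis by auto
  next
    case False
    then obtain a where a: "a \<in> D" by auto
    let ?D' = "D - {b\<in>D. conf a b}"
    have "?D' \<subset> D" using a less.prems(3)[OF a] by blast
    then have "card ?D' < card D" using less.prems(1) by (intro psubset_card_mono)
    then obtain C' where C': "C' \<subseteq> ?D'" "\<forall>x\<in>C'. \<forall>y\<in>C'. x \<noteq> y \<longrightarrow> \<not> conf x y"
       "card ?D' \<le> N * card C'"
    proof -
      have "\<And>x. x \<in> ?D' \<Longrightarrow> card {b\<in>?D'. conf x b} \<le> N"
      proof -
        fix x assume x: "x \<in> ?D'"
        have "card {b\<in>?D'. conf x b} \<le> card {b\<in>D. conf x b}"
          using less.prems(1) by (intro card_mono) auto
        then show "card {b\<in>?D'. conf x b} \<le> N" using less.prems(4) x by force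
      qed
      then show ?thesis using less.hyps[of ?D'] less.prems(1-3) \<open>card ?D' < card D\<close> that
        by (metis (no_types, lifting) DiffD1 finite_Diff)
    qed
    have aC: "a \<notin> C'" using C'(1) less.prems(3)[OF a] by auto
    have fC: "finite C'" using C'(1) less.prems(1) finite_subset by blast
    have "card D \<le> card {b\<in>D. conf a b} + card ?D'"
    proof -
      have eq: "D = {b\<in>D. conf a b} \<union> ?D'" by blast
      have "card D = card ({b\<in>D. conf a b} \<union> ?D')" using eq by (rule arg_cong)
      then show ?thesis using card_Un_le[of "{b\<in>D. conf a b}" ?D'] by linarith
    qed
    also have "\<dots> \<le> N + N * card C'" using less.prems(4)[OF a] C'(3) by linarith
    also have "\<dots> = N * card (insert a C')" using aC fC by simp
    finally show ?thesis using C' a less.prems(2) by (intro exI[of _ "insert a C'"]) auto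
  qed
qed

lemma counting:
  fixes X :: "('m \<Rightarrow> 'q::finite) set" and T :: "'a \<Rightarrow> 'm set"
  assumes "finite C" "finite Fs" "\<forall>m\<in>C. T m \<subseteq> Fs"
    "\<forall>a\<in>C. \<forall>b\<in>C. a \<noteq> b \<longrightarrow> T a \<inter> T b = {}"
    "\<forall>m\<in>C. card (proj (T m) ` X) \<le> r" "\<forall>m\<in>C. card (T m) = p"
  shows "card (proj Fs ` X) \<le> card (UNIV::'q set) ^ (card Fs - p * card C) * r ^ card C"
  using assms
proof (induction C arbitrary: Fs rule: finite_induct)
  case empty
  then show ?case using proj_card_le by simp
next
  case (insert c C)
  let ?R = "Fs - T c"
  have fR: "finite ?R" using insert.prems by auto
  have Tc: "T c \<subseteq> Fs" using insert.prems(2) by simp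
  have fT: "finite (T c)" by (rule finite_subset[OF Tc insert.prems(1)])
  have IH: "card (proj ?R ` X) \<le> card (UNIV::'q set) ^ (card ?R - p * card C) * r ^ card C"
    using insert.IH[OF fR] insert.prems insert.hyps by fastforce
  have cR: "card ?R = card Fs - p" using insert.prems
    by (simp add: card_Diff_subset fT)
  have "Fs = ?R \<union> T c" using insert.prems by auto
  then have "card (proj Fs ` X) \<le> card (proj ?R ` X) * card (proj (T c) ` X)"
    using proj_union_card[OF fR fT, of X] by simp
  also have "\<dots> \<le> card (UNIV::'q set) ^ (card ?R - p * card C) * r ^ card C * r"
    using IH insert.prems by (intro mult_mono) auto
  also have "\<dots> = card (UNIV::'q set) ^ (card Fs - p * card (insert c C)) * r ^ card (insert c C)"
    using insert.hyps cR by (simp add: diff_diff_left algebra_simps)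
  finally show ?case .
qed

lemma final_real:
  fixes q p n k N L :: nat
  assumes q: "q \<ge> 2" and p: "p \<ge> 1" and n: "n > 0" and pk: "p * k \<le> n"
    and nk: "n \<le> 2 * N * k" and N: "N > 0"
    and L: "L \<le> q ^ (n - p * k) * (q ^ p - 1) ^ k"
  shows "ln (real L) / real n \<le> ln (real q) - (real p * ln (real q) - ln (real (q ^ p - 1))) / (2 * real N)"
proof -
  define r where "r = q ^ p - 1"
  have qp: "q ^ p \<ge> 2" using q p by (metis order_trans power_increasing power_one_right self_le_power zero_less_one not_less le_trans one_le_numeral)
  have r1n: "r \<ge> 1" using qp unfolding r_def by linarith
  have r1: "real r \<ge> 1" using r1n by simp
  have rq: "real r = real q ^ p - 1" using qp unfolding r_def by (simp add: of_nat_diff)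
  have delta: "real p * ln (real q) - ln (real r) > 0"
  proof -
    have "ln (real r) < ln (real q ^ p)" using rq r1 q by (subst ln_less_cancel_iff) auto
    also have "\<dots> = real p * ln (real q)" using q by (simp add: ln_realpow)
    finally show ?thesis by simp
  qed
  define \<delta> where "\<delta> = real p * ln (real q) - ln (real r)"
  define Bd where "Bd = real q ^ (n - p * k) * real r ^ k"
  have a1: "1 \<le> real q ^ (n - p * k)" by (rule one_le_power) (use q in simp)
  have b1: "1 \<le> real r ^ k" by (rule one_le_power[OF r1])
  have Bd1: "Bd \<ge> 1" unfolding Bd_def using mult_mono[OF a1 b1] a1 by simp
  have LB: "real L \<le> Bd" unfolding Bd_def r_def using L by (metis of_nat_le_iff of_nat_mult of_nat_power)
  have lnL: "ln (real L) \<le> ln Bd"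
  proof (cases "L = 0")
    case True then show ?thesis using Bd1 by simp
  next
    case False then show ?thesis using LB by (subst ln_le_cancel_iff) auto
  qed
  have lnBd: "ln Bd = real n * ln (real q) - real k * \<delta>"
  proof -
    have "ln Bd = real (n - p * k) * ln (real q) + real k * ln (real r)"
      unfolding Bd_def using q r1 by (simp add: ln_mult ln_realpow)
    also have "real (n - p * k) = real n - real p * real k" using pk by (simp add: of_nat_diff)
    finally show ?thesis unfolding \<delta>_def by (simp add: algebra_simps)
  qed
  have "ln (real L) / real n \<le> ln Bd / real n" using lnL n by (simp add: divide_right_mono)
  also have "\<dots> = ln (real q) - real k * \<delta> / real n" using n lnBd by (simp add: field_simps)
  also have "\<dots> \<le> ln (real q) - \<delta> / (2 * real N)"
  proof -
    have "\<delta> / (2 * real N) \<le> real k * \<delta> / real n"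
    proof -
      have "real n \<le> 2 * real N * real k" using nk by (metis of_nat_le_iff of_nat_mult of_nat_numeral)
      then have "\<delta> * real n \<le> \<delta> * (2 * real N * real k)"
        by (rule mult_left_mono) (use delta in \<open>simp add: \<delta>_def\<close>)
      then have "\<delta> * real n \<le> real k * \<delta> * (2 * real N)" by (simp add: ac_simps)
      then show ?thesis using n N by (simp add: field_simps)
    qed
    then show ?thesis by simp
  qed
  finally show ?thesis unfolding \<delta>_def r_def .
qed
lemma act_facts:
  assumes "cell_space G act m0 gm"
  shows "group G" "\<And>g h x. g \<in> carrier G \<Longrightarrow> h \<in> carrier G \<Longrightarrow> act (g \<otimes>\<^bsub>G\<^esub> h) x = act g (act h x)"
    "\<And>x. act \<one>\<^bsub>G\<^esub> x = x" "\<And>g. g \<in> carrier G \<Longrightarrow> inj (act g)"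
    "\<And>m. gm m \<in> carrier G" "\<And>m. act (gm m) m0 = m"
proof -
  have ta: "transitive_action G UNIV act" using assms by (simp add: cell_space_def)
  then interpret ga: group_action G UNIV act by (simp add: transitive_action_def)
  show "group G" using ga.group_hom group_hom.axioms(1) by blast
  show "\<And>g h x. g \<in> carrier G \<Longrightarrow> h \<in> carrier G \<Longrightarrow> act (g \<otimes>\<^bsub>G\<^esub> h) x = act g (act h x)"
    using ga.composition_rule by blast
  show "\<And>x. act \<one>\<^bsub>G\<^esub> x = x" using ga.id_eq_one by (metis UNIV_I restrict_apply')
  show "\<And>g. g \<in> carrier G \<Longrightarrow> inj (act g)" using ga.inj_prop by blast
  show "\<And>m. gm m \<in> carrier G" "\<And>m. act (gm m) m0 = m" using assms by (auto simp: cell_space_def)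
qed

theorem corollary2:
  fixes G :: "('g, 'b) monoid_scheme" and act :: "'g \<Rightarrow> 'm \<Rightarrow> 'm" and m0 :: 'm
    and gm :: "'m \<Rightarrow> 'g" and I :: "'i set" and rel :: "'i \<Rightarrow> 'i \<Rightarrow> bool"
    and F :: "'i \<Rightarrow> 'm set" and X :: "('m \<Rightarrow> 'q::finite) set" and E :: "'g set set"
  assumes "cell_space G act m0 gm"
    and "right_amenable G act m0 gm"
    and "finite (stab0 G act m0)"
    and "card (UNIV :: 'q set) \<ge> 2"
    and "right_foelner_net G act m0 gm I rel F"
    and "act_invariant G act X"
    and "E \<noteq> {}" and "finite E" and "E \<subseteq> cosets0 G act m0"
    and "proj ((\<lambda>c. semi_act G act m0 gm m0 c) ` E) ` X
           \<subset> ((\<lambda>c. semi_act G act m0 gm m0 c) ` E) \<rightarrow>\<^sub>E (UNIV :: 'q set)"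
  shows "entropy I rel F X < ereal (ln (real (card (UNIV :: 'q set))))"
proof -
  note AF = act_facts[OF assms(1)]
  interpret G: group G by (rule AF(1))
  define H0 where "H0 = stab0 G act m0"
  define rep where "rep c = (SOME g. g \<in> carrier G \<and> c = g <#\<^bsub>G\<^esub> H0)" for c
  have rep: "rep c \<in> carrier G" if "c \<in> E" for c
  proof -
    have "\<exists>g. g \<in> carrier G \<and> c = g <#\<^bsub>G\<^esub> H0" using assms(9) that
      by (auto simp: cosets0_def LCOSETS_def H0_def)
    then show ?thesis unfolding rep_def by (metis (mono_tags, lifting) someI_ex)
  qed
  define sa where "sa m c = semi_act G act m0 gm m c" for m c
  have sa: "sa m c = act (gm m) (act (rep c) m0)" if "c \<in> E" for m c
    using AF(2)[OF AF(5) rep[OF that]] by (simp add: sa_def semi_act_def rep_def H0_def)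
  define T where "T m = (\<lambda>c. sa m c) ` E" for m
  define P where "P = T m0"
  define q where "q = card (UNIV :: 'q set)"
  define p where "p = card P"
  have fT: "finite (T m)" for m using assms(8) by (simp add: T_def)
  have fP: "finite P" using fT by (simp add: P_def)
  have PE: "P = (\<lambda>c. semi_act G act m0 gm m0 c) ` E" by (simp add: P_def T_def sa_def)
  define h where "h m = gm m \<otimes>\<^bsub>G\<^esub> inv\<^bsub>G\<^esub> (gm m0)" for m
  have hG: "h m \<in> carrier G" for m using AF(5) by (simp add: h_def)
  have hsa: "act (h m) (sa m0 c) = sa m c" if "c \<in> E" for m c
  proof -
    have "act (h m) (sa m0 c) = act (gm m) (act (inv\<^bsub>G\<^esub> (gm m0)) (act (gm m0) (act (rep c) m0)))"
      using AF(2,5) sa[OF that] by (simp add: h_def)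
    also have "\<dots> = sa m c"
    proof -
      have e: "act (inv\<^bsub>G\<^esub> (gm m0)) (act (gm m0) y) = y" for y
        using AF(2)[OF G.inv_closed[OF AF(5)] AF(5), of m0 m0 y] AF(3) AF(5) by simp
      show ?thesis using sa[OF that] by (simp add: e)
    qed
    finally show ?thesis .
  qed
  have TP: "T m = act (h m) ` P" for m
    unfolding P_def T_def image_image using hsa by (auto simp: image_iff)
  have cardT: "card (T m) = p" for m
    unfolding TP p_def by (rule card_image) (rule inj_on_subset[OF AF(4)[OF hG] subset_UNIV])
  have p1: "p \<ge> 1" using fP assms(7) by (simp add: p_def P_def T_def Suc_le_eq card_gt_0_iff)
  have fprojP: "finite (proj P ` X)"
  proof -
    have "proj P ` X \<subseteq> P \<rightarrow>\<^sub>E UNIV" by (auto simp: proj_def)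
    moreover have "finite (P \<rightarrow>\<^sub>E (UNIV::'q set))" using fP by (simp add: finite_PiE)
    ultimately show ?thesis using finite_subset by blast
  qed
  have pat: "card (proj (T m) ` X) \<le> card (proj P ` X)" for m
  proof -
    let ?\<Phi> = "\<lambda>pt. restrict (\<lambda>z. pt (act (h m) z)) P"
    have img: "?\<Phi> (proj (T m) x) = proj P (cfg_act G act (inv\<^bsub>G\<^esub> (h m)) x)" for x
      using hG by (auto simp: proj_def cfg_act_def TP fun_eq_iff)
    have inX: "cfg_act G act (inv\<^bsub>G\<^esub> (h m)) x \<in> X" if "x \<in> X" for x
      using assms(6) hG that by (auto simp: act_invariant_def)
    have "inj_on ?\<Phi> (proj (T m) ` X)"
    proof (rule inj_onI)
      fix a b assume "a \<in> proj (T m) ` X" "b \<in> proj (T m) ` X" and eq: "?\<Phi> a = ?\<Phi> b"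
      then obtain x y where xy: "a = proj (T m) x" "b = proj (T m) y" by auto
      have "\<forall>z\<in>P. x (act (h m) z) = y (act (h m) z)"
      proof
        fix z assume z: "z \<in> P"
        have "?\<Phi> a z = ?\<Phi> b z" using eq by simp
        then show "x (act (h m) z) = y (act (h m) z)" using z by (simp add: xy proj_def TP)
      qed
      then show "a = b" unfolding xy proj_def TP by (auto simp: restrict_def fun_eq_iff)
    qed
    moreover have "?\<Phi> ` (proj (T m) ` X) \<subseteq> proj P ` X" using img inX by auto
    ultimately show ?thesis using fprojP card_inj_on_le by blast
  qed
  have patP: "card (proj P ` X) \<le> q ^ p - 1"
  proof -
    have "card (proj P ` X) < card (P \<rightarrow>\<^sub>E (UNIV :: 'q set))"
      using assms(10) fP unfolding PE[symmetric] by (intro psubset_card_mono) (auto simp: finite_PiE)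
    also have "\<dots> = q ^ p" using fP by (simp add: card_PiE q_def p_def)
    finally show ?thesis by simp
  qed
  have H0fin: "finite H0" using assms(3) by (simp add: H0_def)
  have H0one: "\<one>\<^bsub>G\<^esub> \<in> H0" using AF(3) by (simp add: H0_def stab0_def stabilizer_def)
  have "card H0 > 0" using H0fin H0one card_gt_0_iff by blast
  then have cH0: "card H0 \<ge> 1" by simp
  have fib: "finite {m'. sa m' c = y} \<and> card {m'. sa m' c = y} \<le> card H0" if c: "c \<in> E" for c y
  proof (cases "\<exists>m1. sa m1 c = y")
    case False
    then have e: "{m'. sa m' c = y} = {}" by blast
    show ?thesis unfolding e by simp
  next
    case True
    then obtain m1 where m1: "sa m1 c = y" by blast
    define k where "k m' = gm m' \<otimes>\<^bsub>G\<^esub> rep c" for m'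
    have kG: "k m' \<in> carrier G" for m' using AF(5) rep[OF c] by (simp add: k_def)
    have ksa: "act (k m') m0 = sa m' c" for m' using AF(2)[OF AF(5) rep[OF c]] sa[OF c] by (simp add: k_def)
    define f where "f m' = inv\<^bsub>G\<^esub> (k m1) \<otimes>\<^bsub>G\<^esub> k m'" for m'
    have "f ` {m'. sa m' c = y} \<subseteq> H0"
    proof
      fix g assume "g \<in> f ` {m'. sa m' c = y}"
      then obtain m' where m': "sa m' c = y" "g = f m'" by auto
      have "act g m0 = act (inv\<^bsub>G\<^esub> (k m1)) (act (k m1) m0)"
        using m' m1 kG AF(2) ksa by (simp add: f_def)
      also have "\<dots> = m0" using AF(2)[OF G.inv_closed[OF kG[of m1]] kG[of m1], of m0] AF(3) kG by simp
      finally show "g \<in> H0" using m' kG by (simp add: H0_def stab0_def stabilizer_def f_def)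
    qed
    moreover have "inj_on f {m'. sa m' c = y}"
    proof (rule inj_onI)
      fix a b assume "a \<in> {m'. sa m' c = y}" "b \<in> {m'. sa m' c = y}" "f a = f b"
      then have "k a = k b" using kG by (simp add: f_def G.Units_eq)
      then have "gm a = gm b" using AF(5) rep[OF c] by (simp add: k_def)
      then have "act (gm a) m0 = act (gm b) m0" by simp
      then show "a = b" by (simp add: AF(6))
    qed
    ultimately show ?thesis using card_inj_on_le[OF _ _ H0fin] inj_on_finite[OF _ _ H0fin] by blast
  qed
  define N where "N = card E * card E * card H0"
  have conf: "finite {m'. T m \<inter> T m' \<noteq> {}} \<and> card {m'. T m \<inter> T m' \<noteq> {}} \<le> N" for m
  proof -
    have sub: "{m'. T m \<inter> T m' \<noteq> {}} \<subseteq> (\<Union>y\<in>T m. \<Union>c\<in>E. {m'. sa m' c = y})"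
    proof
      fix m' assume "m' \<in> {m'. T m \<inter> T m' \<noteq> {}}"
      then obtain y where y: "y \<in> T m" "y \<in> T m'" by blast
      then obtain c where c: "c \<in> E" "y = sa m' c" unfolding T_def by blast
      show "m' \<in> (\<Union>y\<in>T m. \<Union>c\<in>E. {m'. sa m' c = y})" using y c by blast
    qed
    have fin: "finite (\<Union>y\<in>T m. \<Union>c\<in>E. {m'. sa m' c = y})"
    proof (rule finite_UN_I[OF fT])
      fix y show "finite (\<Union>c\<in>E. {m'. sa m' c = y})"
        by (rule finite_UN_I[OF assms(8)]) (use fib in blast)
    qed
    have "card {m'. T m \<inter> T m' \<noteq> {}} \<le> card (\<Union>y\<in>T m. \<Union>c\<in>E. {m'. sa m' c = y})"
      using sub fin by (rule card_mono[rotated])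
    also have "\<dots> \<le> (\<Sum>y\<in>T m. card (\<Union>c\<in>E. {m'. sa m' c = y}))" using fT by (rule card_UN_le)
    also have "\<dots> \<le> (\<Sum>y\<in>T m. card E * card H0)"
    proof (rule sum_mono)
      fix y
      have "card (\<Union>c\<in>E. {m'. sa m' c = y}) \<le> (\<Sum>c\<in>E. card {m'. sa m' c = y})"
        using assms(8) by (rule card_UN_le)
      also have "\<dots> \<le> (\<Sum>c\<in>E. card H0)" using fib by (intro sum_mono) auto
      finally show "card (\<Union>c\<in>E. {m'. sa m' c = y}) \<le> card E * card H0" by simp
    qed
    also have "\<dots> = card (T m) * (card E * card H0)" by simp
    also have "\<dots> \<le> N" unfolding N_def using card_image_le[OF assms(8), of "\<lambda>c. sa m c"]
      by (simp add: T_def)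
    finally show ?thesis using sub fin finite_subset by blast
  qed
  have N0: "N > 0" using assms(7,8) cH0 H0fin H0one by (auto simp: N_def card_gt_0_iff)
  have Tne: "T m \<noteq> {}" for m using assms(7) by (simp add: T_def)
  have dir: "directed_set I rel" and FI: "\<forall>i\<in>I. finite (F i) \<and> F i \<noteq> {}"
    and fol: "\<forall>c \<in> cosets0 G act m0.
        ((\<lambda>i. real (card (F i - {m. semi_act G act m0 gm m c \<in> F i})) / real (card (F i))) \<longlongrightarrow> 0) (net_filter I rel)"
    using assms(5) by (auto simp: right_foelner_net_def)
  define \<epsilon> where "\<epsilon> = 1 / (2 * real (card E))"
  have eps: "\<epsilon> > 0" using assms(7,8) by (simp add: \<epsilon>_def card_gt_0_iff)
  have ev1: "eventually (\<lambda>i. \<forall>c\<in>E. real (card (F i - {m. sa m c \<in> F i})) / real (card (F i)) < \<epsilon>) (net_filter I rel)"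
    using assms(8) proof (rule eventually_ball_finite, intro ballI)
    fix c assume "c \<in> E"
    then show "eventually (\<lambda>i. real (card (F i - {m. sa m c \<in> F i})) / real (card (F i)) < \<epsilon>) (net_filter I rel)"
    proof -
      have "c \<in> cosets0 G act m0" using assms(9) \<open>c \<in> E\<close> by blast
      then show ?thesis using order_tendstoD(2)[OF fol[rule_format] eps] unfolding sa_def by blast
    qed
  qed
  have ev2: "eventually (\<lambda>i. i \<in> I) (net_filter I rel)"
  proof -
    obtain i0 where "i0 \<in> I" using dir by (auto simp: directed_set_def)
    then show ?thesis unfolding net_filter_def
      by (rule eventually_INF1) (auto simp: eventually_principal)
  qed
  define B where "B = ln (real q) - (real p * ln (real q) - ln (real (q ^ p - 1))) / (2 * real N)"
  have main: "ln (real (card (proj (F i) ` X))) / real (card (F i)) \<le> B"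
    if i: "i \<in> I" and small: "\<forall>c\<in>E. real (card (F i - {m. sa m c \<in> F i})) / real (card (F i)) < \<epsilon>" for i
  proof -
    let ?n = "card (F i)"
    have fF: "finite (F i)" and nF: "F i \<noteq> {}" using FI i by auto
    have n0: "?n > 0" using fF nF by (simp add: card_gt_0_iff)
    define D where "D = {m\<in>F i. \<forall>c\<in>E. sa m c \<in> F i}"
    have fD: "finite D" using fF by (simp add: D_def)
    have bad: "F i - D = (\<Union>c\<in>E. F i - {m. sa m c \<in> F i})" by (auto simp: D_def)
    have "real (card (F i - D)) \<le> (\<Sum>c\<in>E. real (card (F i - {m. sa m c \<in> F i})))"
    proof -
      have c1: "card (F i - D) \<le> (\<Sum>c\<in>E. card (F i - {m. sa m c \<in> F i}))"
        unfolding bad by (rule card_UN_le[OF assms(8)])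
      have "real (card (F i - D)) \<le> real (\<Sum>c\<in>E. card (F i - {m. sa m c \<in> F i}))"
        using c1 by (rule of_nat_mono)
      also have "\<dots> = (\<Sum>c\<in>E. real (card (F i - {m. sa m c \<in> F i})))" by (rule of_nat_sum)
      finally show ?thesis .
    qed
    also have "\<dots> \<le> (\<Sum>c\<in>E. \<epsilon> * real ?n)"
    proof (rule sum_mono)
      fix c assume "c \<in> E"
      then have "real (card (F i - {m. sa m c \<in> F i})) / real ?n < \<epsilon>" using small by auto
      then show "real (card (F i - {m. sa m c \<in> F i})) \<le> \<epsilon> * real ?n" using n0 by (simp add: field_simps)
    qed
    also have "\<dots> = real ?n / 2" using assms(7,8) by (simp add: \<epsilon>_def card_gt_0_iff)
    finally have b: "real (card (F i - D)) \<le> real ?n / 2" .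
    have "?n \<le> card D + card (F i - D)"
    proof -
      have eq: "F i = D \<union> (F i - D)" by (auto simp: D_def)
      have "card (F i) = card (D \<union> (F i - D))" using eq by (rule arg_cong)
      then show ?thesis using card_Un_le[of D "F i - D"] by linarith
    qed
    then have nD: "real ?n \<le> 2 * real (card D)" using b by linarith
    obtain C where C: "C \<subseteq> D" "\<forall>a\<in>C. \<forall>b\<in>C. a \<noteq> b \<longrightarrow> \<not> (T a \<inter> T b \<noteq> {})" "card D \<le> N * card C"
    proof -
      have "\<exists>C\<subseteq>D. (\<forall>a\<in>C. \<forall>b\<in>C. a \<noteq> b \<longrightarrow> \<not> (T a \<inter> T b \<noteq> {})) \<and> card D \<le> N * card C"
      proof (rule greedy[OF fD])
        show "\<And>a b. T a \<inter> T b \<noteq> {} \<Longrightarrow> T b \<inter> T a \<noteq> {}" by blast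
        show "\<And>a. a \<in> D \<Longrightarrow> T a \<inter> T a \<noteq> {}" using Tne by simp
        fix a assume "a \<in> D"
        have "card {b\<in>D. T a \<inter> T b \<noteq> {}} \<le> card {b. T a \<inter> T b \<noteq> {}}"
          using conf[of a] by (intro card_mono) auto
        then show "card {b\<in>D. T a \<inter> T b \<noteq> {}} \<le> N" using conf[of a] by linarith
      qed
      then show ?thesis using that by blast
    qed
    have fC: "finite C" using C(1) fD finite_subset by blast
    have TF: "\<forall>m\<in>C. T m \<subseteq> F i" using C(1) by (auto simp: D_def T_def)
    have disj: "\<forall>a\<in>C. \<forall>b\<in>C. a \<noteq> b \<longrightarrow> T a \<inter> T b = {}" using C(2) by blast
    have cnt: "card (proj (F i) ` X) \<le> q ^ (?n - p * card C) * (q ^ p - 1) ^ card C"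
      unfolding q_def
      by (rule counting[OF fC fF TF disj]) (use pat patP cardT q_def in \<open>auto intro: order_trans\<close>)
    have "card (\<Union>m\<in>C. T m) = (\<Sum>m\<in>C. card (T m))" using fC fT disj by (intro card_UN_disjoint) auto
    also have "\<dots> = p * card C" using cardT by simp
    finally have pc: "card (\<Union>m\<in>C. T m) = p * card C" .
    have "(\<Union>m\<in>C. T m) \<subseteq> F i" using TF by blast
    then have "card (\<Union>m\<in>C. T m) \<le> ?n" by (rule card_mono[OF fF])
    then have "p * card C \<le> ?n" using pc by simp
    moreover have "?n \<le> 2 * N * card C"
    proof -
      have "card D \<le> N * card C" by (rule C(3))
      then have "real (card D) \<le> real N * real (card C)" by (simp only: of_nat_mult[symmetric] of_nat_le_iff)
      then have "real ?n \<le> real (2 * N * card C)" using nD by simp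
      then show ?thesis by (simp only: of_nat_le_iff)
    qed
    ultimately show ?thesis unfolding B_def
      using final_real[OF _ p1 n0 _ _ N0 cnt] assms(4) by (simp add: q_def)
  qed
  have "entropy I rel F X \<le> ereal B"
    unfolding entropy_def
  proof (rule Limsup_bounded)
    show "\<forall>\<^sub>F i in net_filter I rel. ereal (ln (real (card (proj (F i) ` X))) / real (card (F i))) \<le> ereal B"
      using eventually_conj[OF ev1 ev2] by eventually_elim (use main in auto)
  qed
  also have "ereal B < ereal (ln (real q))"
  proof -
    have qp: "q ^ p \<ge> 2" using assms(4) p1 unfolding q_def
      by (metis order_trans power_increasing power_one_right one_le_numeral le_trans)
    have a: "0 < q ^ p - 1" "q ^ p - 1 < q ^ p" "0 < q ^ p" using qp by linarith+
    have "ln (real (q ^ p - 1)) < ln (real (q ^ p))"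
      by (rule ln_less_cancel_iff[THEN iffD2]) (use a in \<open>simp_all only: of_nat_less_iff of_nat_0_less_iff\<close>)
    also have "\<dots> = real p * ln (real q)" using assms(4) by (simp add: ln_realpow q_def)
    finally show ?thesis unfolding B_def using N0 by simp
  qed
  finally show ?thesis by (simp add: q_def)
qed

end
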